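(* Let $\eta\in(0,1)$ and $\epsilon>0$. There exists $N_0$ such that for every Sawtooth model with $n\ge N_0+4$ upper particles, every $2\le r\le n-N_0$ and every $y\in[0,1]$, $$\mathbb P\Big(\bigcup_{r\le i\le r+N_0}\{X_i<\eta\}\ \Big|\ Y_{r+N_0}=y\Big)\ge1-\epsilon.$$
   Context: A (type $--$) Sawtooth model with $n\ge1$ upper particles is specified by functions $f_1,g_1,\dots,f_n,g_n:[0,1]\to[0,\infty)$, each nondecreasing, $C^1$ and not identically zero. It is the probability space $[0,1]^{n+1}\times[0,1]^n$ with probability density at $(x_1,\dots,x_{n+1},y_1,\dots,y_n)$ equal to $\frac{1}{\mathcal V}\prod_{i=1}^n\mathbf 1_{\{x_i\le y_i\}}\mathbf 1_{\{x_{i+1}\le y_i\}}f_i(y_i-x_i)\,g_i(y_i-x_{i+1})$, $\mathcal V$ being the normalizing constant; lower particles $X_1,\dots,X_{n+1}$, upper particles $Y_1,\dots,Y_n$. Conditional probabilities given $Y_j=y$ are computed from the joint density. *)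

theory Defs
  imports "HOL-Analysis.Analysis"
begin

text \<open>Sawtooth model (type --) with n upper particles.
  Lower particles x 1, ..., x (n+1); upper particles y 1, ..., y n, all in [0,1].
  The weight functions are f i, g i for i in {1..n}.\<close>

definition C1_on :: "real set \<Rightarrow> (real \<Rightarrow> real) \<Rightarrow> bool" where
  "C1_on S h \<longleftrightarrow> (\<exists>h'. continuous_on S h' \<and>
      (\<forall>t\<in>S. (h has_real_derivative h' t) (at t within S)))"

definition sawtooth_model :: "nat \<Rightarrow> (nat \<Rightarrow> real \<Rightarrow> real) \<Rightarrow> (nat \<Rightarrow> real \<Rightarrow> real) \<Rightarrow> bool" where
  "sawtooth_model n f g \<longleftrightarrow> n \<ge> 1 \<and>
     (\<forall>i\<in>{1..n}.
        (\<forall>t\<in>{0..1}. f i t \<ge> 0 \<and> g i t \<ge> 0) \<and>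
        mono_on {0..1} (f i) \<and> mono_on {0..1} (g i) \<and>
        C1_on {0..1} (f i) \<and> C1_on {0..1} (g i) \<and>
        (\<exists>t\<in>{0..1}. f i t \<noteq> 0) \<and> (\<exists>t\<in>{0..1}. g i t \<noteq> 0))"

text \<open>Unnormalised joint density (the normalising constant V cancels in all
  conditional probabilities).\<close>
definition sawtooth_weight ::
  "nat \<Rightarrow> (nat \<Rightarrow> real \<Rightarrow> real) \<Rightarrow> (nat \<Rightarrow> real \<Rightarrow> real) \<Rightarrow> (nat \<Rightarrow> real) \<Rightarrow> (nat \<Rightarrow> real) \<Rightarrow> real" where
  "sawtooth_weight n f g x y =
     (\<Prod>i\<in>{1..n+1}. indicator {0..1} (x i)) *
     (\<Prod>i\<in>{1..n}. indicator {0..1} (y i)) *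
     (\<Prod>i\<in>{1..n}. (if x i \<le> y i \<and> x (Suc i) \<le> y i
                      then f i (y i - x i) * g i (y i - x (Suc i)) else 0))"

text \<open>Integral of (indicator of the event P) times the joint weight over all
  variables except y j, with y j fixed to the value t.  With P = True this is
  V times the marginal density of Y_j at t.\<close>
definition sawtooth_slice ::
  "nat \<Rightarrow> (nat \<Rightarrow> real \<Rightarrow> real) \<Rightarrow> (nat \<Rightarrow> real \<Rightarrow> real) \<Rightarrow> nat \<Rightarrow> real \<Rightarrow>
   ((nat \<Rightarrow> real) \<Rightarrow> (nat \<Rightarrow> real) \<Rightarrow> bool) \<Rightarrow> real" where
  "sawtooth_slice n f g j t P =
     integral\<^sup>L (pair_measure (PiM {1..n+1} (\<lambda>_. lborel)) (PiM ({1..n} - {j}) (\<lambda>_. lborel)))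
       (\<lambda>(x, y). (if P x (y(j := t)) then 1 else 0) * sawtooth_weight n f g x (y(j := t)))"

definition sawtooth_marg ::
  "nat \<Rightarrow> (nat \<Rightarrow> real \<Rightarrow> real) \<Rightarrow> (nat \<Rightarrow> real \<Rightarrow> real) \<Rightarrow> nat \<Rightarrow> real \<Rightarrow> real" where
  "sawtooth_marg n f g j t = sawtooth_slice n f g j t (\<lambda>_ _. True)"

definition sawtooth_cond ::
  "nat \<Rightarrow> (nat \<Rightarrow> real \<Rightarrow> real) \<Rightarrow> (nat \<Rightarrow> real \<Rightarrow> real) \<Rightarrow> nat \<Rightarrow> real \<Rightarrow>
   ((nat \<Rightarrow> real) \<Rightarrow> (nat \<Rightarrow> real) \<Rightarrow> bool) \<Rightarrow> real" where
  "sawtooth_cond n f g j t P = sawtooth_slice n f g j t P / sawtooth_marg n f g j t"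

end

theory Submission
  imports Defs
begin


lemma one_dim:
  fixes \<phi> :: "real \<Rightarrow> real" and \<eta> :: real
  assumes meas: "\<phi> \<in> borel_measurable borel"
    and nonneg: "\<And>s. 0 \<le> \<phi> s"
    and out: "\<And>s. s \<notin> {0..1} \<Longrightarrow> \<phi> s = 0"
    and anti: "\<And>a b. 0 \<le> a \<Longrightarrow> a \<le> b \<Longrightarrow> b \<le> 1 \<Longrightarrow> \<phi> b \<le> \<phi> a"
    and e0: "0 < \<eta>" and e1: "\<eta> < 1"
  shows "(\<integral>\<^sup>+s. ennreal (indicator {\<eta>..} s * \<phi> s) \<partial>lborel)
          \<le> ennreal (1 - \<eta>) * (\<integral>\<^sup>+s. ennreal (\<phi> s) \<partial>lborel)"
proof -
  define B where "B = (\<integral>\<^sup>+s. ennreal (indicator {\<eta>..} s * \<phi> s) \<partial>lborel)"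
  define A where "A = (\<integral>\<^sup>+s. ennreal (indicator {..<\<eta>} s * \<phi> s) \<partial>lborel)"
  define c where "c = \<phi> \<eta>"
  have c0: "0 \<le> c" using nonneg c_def by auto
  have T: "(\<integral>\<^sup>+s. ennreal (\<phi> s) \<partial>lborel) = A + B"
  proof -
    have "(\<integral>\<^sup>+s. ennreal (\<phi> s) \<partial>lborel) = (\<integral>\<^sup>+s. ennreal (indicator {..<\<eta>} s * \<phi> s) + ennreal (indicator {\<eta>..} s * \<phi> s) \<partial>lborel)"
      by (intro nn_integral_cong) (auto simp: indicator_def nonneg)
    also have "\<dots> = A + B" unfolding A_def B_def
      by (rule nn_integral_add) (use meas in auto)
    finally show ?thesis .
  qed
  have Ble: "B \<le> ennreal c * ennreal (1 - \<eta>)"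
  proof -
    have "B \<le> (\<integral>\<^sup>+s. ennreal c * indicator {\<eta>..1} s \<partial>lborel)" unfolding B_def
    proof (intro nn_integral_mono)
      fix s show "ennreal (indicator {\<eta>..} s * \<phi> s) \<le> ennreal c * indicator {\<eta>..1} s"
        using anti[of \<eta> s] out[of s] e0 nonneg[of s]
        by (cases "\<eta> \<le> s"; cases "s \<le> 1") (auto simp: indicator_def c_def)
    qed
    also have "\<dots> = ennreal c * ennreal (1 - \<eta>)"
      using e1 by (subst nn_integral_cmult_indicator) auto
    finally show ?thesis .
  qed
  have Age: "ennreal c * ennreal \<eta> \<le> A"
  proof -
    have "ennreal c * ennreal \<eta> = (\<integral>\<^sup>+s. ennreal c * indicator {0..<\<eta>} s \<partial>lborel)"
      using e0 by (subst nn_integral_cmult_indicator) auto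
    also have "\<dots> \<le> A" unfolding A_def
    proof (intro nn_integral_mono)
      fix s show "ennreal c * indicator {0..<\<eta>} s \<le> ennreal (indicator {..<\<eta>} s * \<phi> s)"
        using anti[of s \<eta>] e1
        by (cases "0 \<le> s \<and> s < \<eta>") (auto simp: indicator_def c_def intro: ennreal_leI)
    qed
    finally show ?thesis .
  qed
  have "ennreal \<eta> * B \<le> ennreal \<eta> * (ennreal c * ennreal (1 - \<eta>))"
    by (intro mult_left_mono Ble) auto
  also have "\<dots> = ennreal (1 - \<eta>) * (ennreal c * ennreal \<eta>)"
    by (simp add: ac_simps)
  also have "\<dots> \<le> ennreal (1 - \<eta>) * A"
    by (intro mult_left_mono Age) auto
  finally have key: "ennreal \<eta> * B \<le> ennreal (1 - \<eta>) * A" .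
  have "B = (ennreal \<eta> + ennreal (1 - \<eta>)) * B"
    using e0 e1 by (subst ennreal_plus[symmetric]) auto
  also have "\<dots> = ennreal \<eta> * B + ennreal (1 - \<eta>) * B" by (simp add: distrib_right)
  also have "\<dots> \<le> ennreal (1 - \<eta>) * A + ennreal (1 - \<eta>) * B"
    using key by (intro add_right_mono)
  also have "\<dots> = ennreal (1 - \<eta>) * (A + B)" by (simp add: distrib_left)
  finally show ?thesis using T B_def by simp
qed


lemma prod_bound:
  fixes \<psi> :: "nat \<Rightarrow> real \<Rightarrow> real" and \<eta> :: real and I J :: "nat set"
  assumes fin: "finite J" and IJ: "I \<subseteq> J"
    and meas: "\<And>i. i \<in> J \<Longrightarrow> \<psi> i \<in> borel_measurable borel"
    and nonneg: "\<And>i s. 0 \<le> \<psi> i s"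
    and out: "\<And>i s. i \<in> J \<Longrightarrow> s \<notin> {0..1} \<Longrightarrow> \<psi> i s = 0"
    and anti: "\<And>i a b. i \<in> J \<Longrightarrow> 0 \<le> a \<Longrightarrow> a \<le> b \<Longrightarrow> b \<le> 1 \<Longrightarrow> \<psi> i b \<le> \<psi> i a"
    and e0: "0 < \<eta>" and e1: "\<eta> < 1"
  shows "(\<integral>\<^sup>+x. ennreal ((if \<forall>i\<in>I. \<eta> \<le> x i then 1 else 0) * (\<Prod>i\<in>J. \<psi> i (x i))) \<partial>PiM J (\<lambda>_. lborel))
     \<le> ennreal ((1 - \<eta>) ^ card I) * (\<integral>\<^sup>+x. ennreal (\<Prod>i\<in>J. \<psi> i (x i)) \<partial>PiM J (\<lambda>_. lborel))"
proof -
  interpret P: product_sigma_finite "\<lambda>_::nat. lborel :: real measure"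
    by (simp add: product_sigma_finite_def sigma_finite_lborel)
  define \<psi>' where "\<psi>' i s = (if i \<in> I then indicator {\<eta>..} s else 1) * \<psi> i s" for i s
  have fin_I: "finite I" using fin IJ finite_subset by blast
  have m': "\<And>i. i \<in> J \<Longrightarrow> (\<lambda>s. ennreal (\<psi>' i s)) \<in> borel_measurable lborel"
    unfolding \<psi>'_def using meas by (auto)
  have m: "\<And>i. i \<in> J \<Longrightarrow> (\<lambda>s. ennreal (\<psi> i s)) \<in> borel_measurable lborel"
    using meas by auto
  have "(\<integral>\<^sup>+x. ennreal ((if \<forall>i\<in>I. \<eta> \<le> x i then 1 else 0) * (\<Prod>i\<in>J. \<psi> i (x i))) \<partial>PiM J (\<lambda>_. lborel))
      = (\<integral>\<^sup>+x. (\<Prod>i\<in>J. ennreal (\<psi>' i (x i))) \<partial>PiM J (\<lambda>_. lborel))"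
  proof (intro nn_integral_cong)
    fix x :: "nat \<Rightarrow> real"
    have "(\<Prod>i\<in>J. ennreal (\<psi>' i (x i))) = ennreal (\<Prod>i\<in>J. \<psi>' i (x i))"
      by (rule prod_ennreal) (simp add: \<psi>'_def nonneg)
    also have "(\<Prod>i\<in>J. \<psi>' i (x i)) = (\<Prod>i\<in>J. (if i \<in> I then indicator {\<eta>..} (x i) else 1)) * (\<Prod>i\<in>J. \<psi> i (x i))"
      unfolding \<psi>'_def by (rule prod.distrib)
    also have "(\<Prod>i\<in>J. (if i \<in> I then indicator {\<eta>..} (x i) else 1 :: real)) = (if \<forall>i\<in>I. \<eta> \<le> x i then 1 else 0)"
    proof (cases "\<forall>i\<in>I. \<eta> \<le> x i")
      case True then show ?thesis by (intro trans[OF prod.neutral]) (auto simp: indicator_def)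
    next
      case False
      then obtain k where "k \<in> I" "\<not> \<eta> \<le> x k" by auto
      then have "(\<Prod>i\<in>J. (if i \<in> I then indicator {\<eta>..} (x i) else 1 :: real)) = 0"
        using IJ fin by (subst prod_zero_iff) (auto simp: indicator_def intro!: bexI[of _ k])
      then show ?thesis using False by simp
    qed
    finally show "ennreal ((if \<forall>i\<in>I. \<eta> \<le> x i then 1 else 0) * (\<Prod>i\<in>J. \<psi> i (x i))) = (\<Prod>i\<in>J. ennreal (\<psi>' i (x i)))"
      by simp
  qed
  also have "\<dots> = (\<Prod>i\<in>J. (\<integral>\<^sup>+s. ennreal (\<psi>' i s) \<partial>lborel))"
    by (rule P.product_nn_integral_prod) (use fin m' in auto)
  also have "\<dots> \<le> (\<Prod>i\<in>J. (if i \<in> I then ennreal (1 - \<eta>) else 1) * (\<integral>\<^sup>+s. ennreal (\<psi> i s) \<partial>lborel))"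
  proof (rule prod_mono_ennreal)
    fix i assume iJ: "i \<in> J"
    show "(\<integral>\<^sup>+s. ennreal (\<psi>' i s) \<partial>lborel) \<le> (if i \<in> I then ennreal (1 - \<eta>) else 1) * (\<integral>\<^sup>+s. ennreal (\<psi> i s) \<partial>lborel)"
    proof (cases "i \<in> I")
      case True
      then show ?thesis unfolding \<psi>'_def
        using one_dim[of "\<psi> i" \<eta>, OF meas[OF iJ] nonneg out[OF iJ] anti[OF iJ] e0 e1] by simp
    qed (simp add: \<psi>'_def)
  qed
  also have "\<dots> = (\<Prod>i\<in>J. (if i \<in> I then ennreal (1 - \<eta>) else 1)) * (\<Prod>i\<in>J. (\<integral>\<^sup>+s. ennreal (\<psi> i s) \<partial>lborel))"
    by (rule prod.distrib)
  also have "(\<Prod>i\<in>J. (if i \<in> I then ennreal (1 - \<eta>) else 1)) = ennreal ((1 - \<eta>) ^ card I)"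
  proof -
    have II: "{i \<in> J. i \<in> I} = I" using IJ by auto
    have "(\<Prod>i\<in>J. (if i \<in> I then ennreal (1 - \<eta>) else 1)) = (\<Prod>i\<in>I. ennreal (1 - \<eta>))"
      using prod.inter_filter[of J "\<lambda>_. ennreal (1 - \<eta>)" "\<lambda>i. i \<in> I", symmetric] fin IJ
      by (simp add: II)
    also have "\<dots> = ennreal ((1 - \<eta>) ^ card I)" using e1 by (simp add: ennreal_power)
    finally show ?thesis .
  qed
  also have "(\<Prod>i\<in>J. (\<integral>\<^sup>+s. ennreal (\<psi> i s) \<partial>lborel)) = (\<integral>\<^sup>+x. (\<Prod>i\<in>J. ennreal (\<psi> i (x i))) \<partial>PiM J (\<lambda>_. lborel))"
    by (rule P.product_nn_integral_prod[symmetric]) (use fin m in auto)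
  also have "\<dots> = (\<integral>\<^sup>+x. ennreal (\<Prod>i\<in>J. \<psi> i (x i)) \<partial>PiM J (\<lambda>_. lborel))"
    by (intro nn_integral_cong prod_ennreal) (simp add: nonneg)
  finally show ?thesis .
qed


definition cl :: "real \<Rightarrow> real" where "cl u = max 0 (min 1 u)"
definition FF :: "nat \<Rightarrow> (nat \<Rightarrow> real \<Rightarrow> real) \<Rightarrow> nat \<Rightarrow> real \<Rightarrow> real" where
  "FF n f i u = (if i \<in> {1..n} then f i (cl u) else 0)"
definition hfac :: "nat \<Rightarrow> (nat \<Rightarrow> real \<Rightarrow> real) \<Rightarrow> (nat \<Rightarrow> real \<Rightarrow> real) \<Rightarrow> (nat \<Rightarrow> real) \<Rightarrow> nat \<Rightarrow> real \<Rightarrow> real" where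
  "hfac n f g y i s = indicator {0..1} s *
     (if i \<le> n then (if s \<le> y i then FF n f i (y i - s) else 0) else 1) *
     (if 2 \<le> i then (if s \<le> y (i - 1) then FF n g (i - 1) (y (i - 1) - s) else 0) else 1)"
definition Cy :: "nat \<Rightarrow> (nat \<Rightarrow> real) \<Rightarrow> real" where
  "Cy n y = (\<Prod>i\<in>{1..n}. indicator {0..1} (y i))"

lemma factorization:
  "sawtooth_weight n f g x y = Cy n y * (\<Prod>i\<in>{1..n+1}. hfac n f g y i (x i))"
proof (cases "\<exists>k\<in>{1..n+1}. x k \<notin> {0..1}")
  case True
  then obtain k where k: "k \<in> {1..n+1}" "x k \<notin> {0..1}" by blast
  have "(\<Prod>i\<in>{1..n+1}. indicator {0..1} (x i) :: real) = 0"
    using k by (subst prod_zero_iff) (auto simp: indicator_def intro!: bexI[of _ k])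
  moreover have "(\<Prod>i\<in>{1..n+1}. hfac n f g y i (x i)) = 0"
    using k by (subst prod_zero_iff) (auto simp: hfac_def indicator_def intro!: bexI[of _ k])
  ultimately show ?thesis by (simp only: sawtooth_weight_def mult_zero_left mult_zero_right)
next
  case False
  note xin = False
  show ?thesis
  proof (cases "\<exists>k\<in>{1..n}. y k \<notin> {0..1}")
    case True
    then obtain k where k: "k \<in> {1..n}" "y k \<notin> {0..1}" by blast
    have "(\<Prod>i\<in>{1..n}. indicator {0..1} (y i) :: real) = 0"
      using k by (subst prod_zero_iff) (auto simp: indicator_def intro!: bexI[of _ k])
    then show ?thesis by (simp only: sawtooth_weight_def Cy_def mult_zero_left mult_zero_right)
  next
    case False
    note yin = False
    have X1: "(\<Prod>i\<in>{1..n+1}. indicator {0..1} (x i) :: real) = 1"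
      using xin by (intro prod.neutral) (auto simp: indicator_def)
    have Y1: "(\<Prod>i\<in>{1..n}. indicator {0..1} (y i) :: real) = 1"
      using yin by (intro prod.neutral) (auto simp: indicator_def)
    define a where "a i = (if i \<le> n then (if x i \<le> y i then FF n f i (y i - x i) else 0) else 1)" for i
    define b where "b i = (if 2 \<le> i then (if x i \<le> y (i - 1) then FF n g (i - 1) (y (i - 1) - x i) else 0) else 1)" for i
    have "(\<Prod>i\<in>{1..n+1}. hfac n f g y i (x i)) = (\<Prod>i\<in>{1..n+1}. a i * b i)"
      using xin by (intro prod.cong) (auto simp: hfac_def a_def b_def indicator_def)
    also have "\<dots> = (\<Prod>i\<in>{1..n+1}. a i) * (\<Prod>i\<in>{1..n+1}. b i)" by (rule prod.distrib)
    also have "(\<Prod>i\<in>{1..n+1}. a i) = (\<Prod>i\<in>{1..n}. a i)"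
      by (simp add: prod.cl_ivl_Suc a_def)
    also have "(\<Prod>i\<in>{1..n+1}. b i) = (\<Prod>i\<in>{1..n}. b (Suc i))"
    proof -
      have "(\<Prod>i\<in>{1..n+1}. b i) = b 1 * (\<Prod>i\<in>{Suc 1..Suc n}. b i)"
        by (subst prod.atLeast_Suc_atMost) auto
      also have "\<dots> = (\<Prod>i\<in>{1..n}. b (Suc i))"
        using prod.shift_bounds_cl_Suc_ivl[of b 1 n] by (simp add: b_def)
      finally show ?thesis .
    qed
    also have "(\<Prod>i\<in>{1..n}. a i) * (\<Prod>i\<in>{1..n}. b (Suc i)) = (\<Prod>i\<in>{1..n}. a i * b (Suc i))"
      by (rule prod.distrib[symmetric])
    also have "\<dots> = (\<Prod>i\<in>{1..n}. (if x i \<le> y i \<and> x (Suc i) \<le> y i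
                      then f i (y i - x i) * g i (y i - x (Suc i)) else 0))"
    proof (intro prod.cong refl)
      fix i assume i: "i \<in> {1..n}"
      then have "x i \<in> {0..1}" "x (Suc i) \<in> {0..1}" "y i \<in> {0..1}" using xin yin by auto
      then show "a i * b (Suc i) = (if x i \<le> y i \<and> x (Suc i) \<le> y i
                      then f i (y i - x i) * g i (y i - x (Suc i)) else 0)"
        using i by (auto simp: a_def b_def FF_def cl_def)
    qed
    finally show ?thesis by (simp only: sawtooth_weight_def Cy_def X1 Y1 mult_1_left)
  qed
qed


lemma FF_props:
  assumes h: "\<forall>i\<in>{1..n}. (\<forall>t\<in>{0..1}. 0 \<le> h i t) \<and> mono_on {0..1} (h i) \<and> C1_on {0..1} (h i)"
  shows "0 \<le> FF n h i u" and "u \<le> v \<Longrightarrow> FF n h i u \<le> FF n h i v"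
    and "continuous_on UNIV (FF n h i)"
proof -
  have clin: "cl u \<in> {0..1}" for u by (auto simp: cl_def)
  have clmono: "u \<le> v \<Longrightarrow> cl u \<le> cl v" for u v by (auto simp: cl_def)
  show "0 \<le> FF n h i u" using h clin by (auto simp: FF_def)
  show "u \<le> v \<Longrightarrow> FF n h i u \<le> FF n h i v"
    using h clin[of u] clin[of v] clmono[of u v] by (auto simp: FF_def mono_on_def)
  show "continuous_on UNIV (FF n h i)"
  proof (cases "i \<in> {1..n}")
    case True
    then have "C1_on {0..1} (h i)" using h by auto
    then obtain h' where "\<forall>t\<in>{0..1}. (h i has_real_derivative h' t) (at t within {0..1})"
      unfolding C1_on_def by blast
    then have c: "continuous_on {0..1} (h i)" by (intro DERIV_continuous_on) auto
    have ccl: "continuous_on UNIV cl" unfolding cl_def by (intro continuous_intros)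
    have "continuous_on UNIV (\<lambda>u. h i (cl u))"
      by (rule continuous_on_compose2[OF c ccl]) (use clin in auto)
    then show ?thesis using True by (simp add: FF_def)
  next
    case False
    then have "FF n h i = (\<lambda>_. 0)" by (auto simp: FF_def fun_eq_iff)
    then show ?thesis by simp
  qed
qed

lemma model_FF:
  assumes "sawtooth_model n f g"
  shows "\<forall>i\<in>{1..n}. (\<forall>t\<in>{0..1}. 0 \<le> f i t) \<and> mono_on {0..1} (f i) \<and> C1_on {0..1} (f i)"
    and "\<forall>i\<in>{1..n}. (\<forall>t\<in>{0..1}. 0 \<le> g i t) \<and> mono_on {0..1} (g i) \<and> C1_on {0..1} (g i)"
  using assms by (auto simp: sawtooth_model_def)

lemma hfac_meas:
  assumes m: "sawtooth_model n f g"
    and S: "S \<in> borel_measurable M" and Y: "\<And>k. (\<lambda>\<omega>. Y \<omega> k) \<in> borel_measurable M"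
  shows "(\<lambda>\<omega>. hfac n f g (Y \<omega>) i (S \<omega>)) \<in> borel_measurable M"
proof -
  have [measurable]: "FF n f k \<in> borel_measurable borel" "FF n g k \<in> borel_measurable borel" for k
    using FF_props(3)[OF model_FF(1)[OF m]] FF_props(3)[OF model_FF(2)[OF m]]
    by (auto intro: borel_measurable_continuous_onI)
  note S[measurable] Y[measurable]
  show ?thesis unfolding hfac_def by measurable
qed

lemma hfac_props:
  assumes m: "sawtooth_model n f g"
  shows "0 \<le> hfac n f g y i s"
    and "s \<notin> {0..1} \<Longrightarrow> hfac n f g y i s = 0"
    and "0 \<le> a \<Longrightarrow> a \<le> b \<Longrightarrow> hfac n f g y i b \<le> hfac n f g y i a"
proof -
  note F0 = FF_props(1)[OF model_FF(1)[OF m]] FF_props(1)[OF model_FF(2)[OF m]]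
  note Fm = FF_props(2)[OF model_FF(1)[OF m]] FF_props(2)[OF model_FF(2)[OF m]]
  show "0 \<le> hfac n f g y i s" unfolding hfac_def using F0 by (auto intro!: mult_nonneg_nonneg)
  show "s \<notin> {0..1} \<Longrightarrow> hfac n f g y i s = 0" by (simp add: hfac_def)
  assume a0: "0 \<le> a" and ab: "a \<le> b"
  define A where "A s = (if i \<le> n then (if s \<le> y i then FF n f i (y i - s) else 0) else 1)" for s
  define B where "B s = (if 2 \<le> i then (if s \<le> y (i - 1) then FF n g (i - 1) (y (i - 1) - s) else 0) else 1)" for s
  have A0: "0 \<le> A s" for s using F0 by (auto simp: A_def)
  have B0: "0 \<le> B s" for s using F0 by (auto simp: B_def)
  have "A b \<le> A a" using ab F0 Fm[of "y i - b" "y i - a"] by (auto simp: A_def)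
  moreover have "B b \<le> B a" using ab F0 Fm[of "y (i-1) - b" "y (i-1) - a"] by (auto simp: B_def)
  ultimately have "A b * B b \<le> A a * B a" using A0 B0 by (intro mult_mono) auto
  then show "hfac n f g y i b \<le> hfac n f g y i a"
    unfolding hfac_def A_def[symmetric] B_def[symmetric]
    using a0 ab A0 B0 by (auto simp: indicator_def)
qed


lemma comp_meas: "(\<lambda>y. y k) \<in> borel_measurable (PiM J (\<lambda>_. lborel::real measure))"
proof (cases "k \<in> J")
  case True
  then show ?thesis by measurable
next
  case False
  have "(\<lambda>y. undefined::real) \<in> borel_measurable (PiM J (\<lambda>_. lborel::real measure))" by simp
  then show ?thesis
    by (rule measurable_cong[THEN iffD1, rotated]) (use False in \<open>auto simp: space_PiM PiE_def extensional_def\<close>)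
qed

lemma weight_nonneg:
  assumes m: "sawtooth_model n f g"
  shows "0 \<le> sawtooth_weight n f g x y"
  unfolding factorization Cy_def
  by (intro mult_nonneg_nonneg prod_nonneg hfac_props(1)[OF m]) auto


lemma real_frac:
  fixes T P N q :: real
  assumes "T = P + N" "N \<le> q * T" "T > 0"
  shows "1 - q \<le> P / T"
proof -
  have "(1 - q) * T \<le> P" using assms by (simp add: algebra_simps)
  then show ?thesis using assms(3) by (simp add: pos_le_divide_eq)
qed

lemma core:
  fixes \<eta> t :: real and j n :: nat and I :: "nat set"
  assumes m: "sawtooth_model n f g" and e0: "0 < \<eta>" and e1: "\<eta> < 1" and IJ: "I \<subseteq> {1..n+1}"
    and pos: "sawtooth_marg n f g j t > 0"
  shows "sawtooth_cond n f g j t (\<lambda>x y. \<exists>i\<in>I. x i < \<eta>) \<ge> 1 - (1 - \<eta>) ^ card I"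
proof -
  define M1 where "M1 = PiM {1..n+1} (\<lambda>_. lborel::real measure)"
  define M2 where "M2 = PiM ({1..n} - {j}) (\<lambda>_. lborel::real measure)"
  define q where "q = (1 - \<eta>) ^ card I"
  have q0: "0 \<le> q" using e1 by (simp add: q_def)
  interpret P: product_sigma_finite "\<lambda>_::nat. lborel :: real measure"
    by (simp add: product_sigma_finite_def sigma_finite_lborel)
  interpret PS: pair_sigma_finite M1 M2
    unfolding pair_sigma_finite_def M1_def M2_def by (auto intro: P.sigma_finite)
  define \<Phi> where "\<Phi> Q \<omega> = (if Q (fst \<omega>) then 1 else 0) * sawtooth_weight n f g (fst \<omega>) ((snd \<omega>)(j := t))"
    for Q :: "(nat \<Rightarrow> real) \<Rightarrow> bool" and \<omega>
  have xm[measurable]: "(\<lambda>\<omega>. fst \<omega> k) \<in> borel_measurable (M1 \<Otimes>\<^sub>M M2)" for k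
    unfolding M1_def by (rule measurable_compose[OF measurable_fst comp_meas])
  have ym[measurable]: "(\<lambda>\<omega>. ((snd \<omega>)(j := t)) k) \<in> borel_measurable (M1 \<Otimes>\<^sub>M M2)" for k
  proof (cases "k = j")
    case False
    have "(\<lambda>\<omega>. (snd \<omega>) k) \<in> borel_measurable (M1 \<Otimes>\<^sub>M M2)"
      unfolding M2_def by (rule measurable_compose[OF measurable_snd comp_meas])
    then show ?thesis using False by simp
  qed simp
  have hm[measurable]: "(\<lambda>\<omega>. hfac n f g ((snd \<omega>)(j := t)) i (fst \<omega> i)) \<in> borel_measurable (M1 \<Otimes>\<^sub>M M2)" for i
    by (rule hfac_meas[OF m xm ym])
  have \<Phi>m: "\<Phi> Q \<in> borel_measurable (M1 \<Otimes>\<^sub>M M2)" if Q: "Q \<in> measurable M1 (count_space UNIV)" for Q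
  proof -
    have [measurable]: "(\<lambda>\<omega>. Q (fst \<omega>)) \<in> measurable (M1 \<Otimes>\<^sub>M M2) (count_space UNIV)"
      by (rule measurable_compose[OF measurable_fst Q])
    show ?thesis unfolding \<Phi>_def factorization Cy_def by measurable
  qed
  have \<Phi>0: "0 \<le> \<Phi> Q \<omega>" for Q \<omega> unfolding \<Phi>_def using weight_nonneg[OF m] by simp
  have slice_eq: "sawtooth_slice n f g j t (\<lambda>x y. Q x) = enn2real (\<integral>\<^sup>+\<omega>. ennreal (\<Phi> Q \<omega>) \<partial>(M1 \<Otimes>\<^sub>M M2))"
    if Q: "Q \<in> measurable M1 (count_space UNIV)" for Q
  proof -
    have "sawtooth_slice n f g j t (\<lambda>x y. Q x) = integral\<^sup>L (M1 \<Otimes>\<^sub>M M2) (\<Phi> Q)"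
      unfolding sawtooth_slice_def M1_def M2_def \<Phi>_def by (simp add: case_prod_beta')
    also have "\<dots> = enn2real (\<integral>\<^sup>+\<omega>. ennreal (\<Phi> Q \<omega>) \<partial>(M1 \<Otimes>\<^sub>M M2))"
      by (rule integral_eq_nn_integral) (use \<Phi>m[OF Q] \<Phi>0 in auto)
    finally show ?thesis .
  qed
  define NQ where "NQ x = (\<forall>i\<in>I. \<eta> \<le> x i)" for x :: "nat \<Rightarrow> real"
  define PQ where "PQ x = (\<exists>i\<in>I. x i < \<eta>)" for x :: "nat \<Rightarrow> real"
  have finI: "finite I" using IJ finite_subset by blast
  have compM1[measurable]: "(\<lambda>x. x k) \<in> borel_measurable M1" for k unfolding M1_def by (rule comp_meas)
  have NQm: "NQ \<in> measurable M1 (count_space UNIV)" unfolding NQ_def using finI by measurable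
  have PQm: "PQ \<in> measurable M1 (count_space UNIV)" unfolding PQ_def using finI by measurable
  have TQm: "(\<lambda>_. True) \<in> measurable M1 (count_space UNIV)" by simp
  define ST where "ST = (\<integral>\<^sup>+\<omega>. ennreal (\<Phi> (\<lambda>_. True) \<omega>) \<partial>(M1 \<Otimes>\<^sub>M M2))"
  define SP where "SP = (\<integral>\<^sup>+\<omega>. ennreal (\<Phi> PQ \<omega>) \<partial>(M1 \<Otimes>\<^sub>M M2))"
  define SN where "SN = (\<integral>\<^sup>+\<omega>. ennreal (\<Phi> NQ \<omega>) \<partial>(M1 \<Otimes>\<^sub>M M2))"
  have marg_eq: "sawtooth_marg n f g j t = enn2real ST"
    unfolding sawtooth_marg_def ST_def using slice_eq[OF TQm] by simp
  have sl_eq: "sawtooth_slice n f g j t (\<lambda>x y. \<exists>i\<in>I. x i < \<eta>) = enn2real SP"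
    unfolding SP_def using slice_eq[OF PQm] by (simp add: PQ_def)
  have ST_sum: "ST = SP + SN"
  proof -
    have "ST = (\<integral>\<^sup>+\<omega>. ennreal (\<Phi> PQ \<omega>) + ennreal (\<Phi> NQ \<omega>) \<partial>(M1 \<Otimes>\<^sub>M M2))"
      unfolding ST_def by (intro nn_integral_cong) (auto simp: \<Phi>_def PQ_def NQ_def not_less)
    also have "\<dots> = SP + SN" unfolding SP_def SN_def
      by (rule nn_integral_add) (use \<Phi>m[OF PQm] \<Phi>m[OF NQm] in auto)
    finally show ?thesis .
  qed
  have SN_le: "SN \<le> ennreal q * ST"
  proof -
    have "SN = (\<integral>\<^sup>+y. (\<integral>\<^sup>+x. ennreal (\<Phi> NQ (x, y)) \<partial>M1) \<partial>M2)"
      unfolding SN_def by (rule PS.nn_integral_snd[symmetric]) (use \<Phi>m[OF NQm] in auto)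
    also have "\<dots> \<le> (\<integral>\<^sup>+y. (\<integral>\<^sup>+x. ennreal q * ennreal (\<Phi> (\<lambda>_. True) (x, y)) \<partial>M1) \<partial>M2)"
    proof (rule nn_integral_mono)
      fix y :: "nat \<Rightarrow> real" assume "y \<in> space M2"
      define y' where "y' = y(j := t)"
      define c where "c = Cy n y'"
      have c0: "0 \<le> c" unfolding c_def Cy_def by (intro prod_nonneg) auto
      define K where "K x = (\<Prod>i\<in>{1..n+1}. hfac n f g y' i (x i))" for x
      have K0: "0 \<le> K x" for x unfolding K_def by (intro prod_nonneg hfac_props(1)[OF m])
      have phiN: "\<Phi> Q (x, y) = c * ((if Q x then 1 else 0) * K x)" for Q x
        unfolding \<Phi>_def factorization fst_conv snd_conv y'_def[symmetric] c_def[symmetric] K_def[symmetric]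
        by simp
      have hm1: "(\<lambda>x. hfac n f g y' i (x i)) \<in> borel_measurable M1" for i
        by (rule hfac_meas[OF m compM1]) simp
      note hm1[measurable]
      have Km: "(\<lambda>x. ennreal (K x)) \<in> borel_measurable M1" unfolding K_def by measurable
      have NKm: "(\<lambda>x. ennreal ((if NQ x then 1 else 0) * K x)) \<in> borel_measurable M1"
        using NQm unfolding K_def by measurable
      have "(\<integral>\<^sup>+x. ennreal (\<Phi> NQ (x, y)) \<partial>M1) = (\<integral>\<^sup>+x. ennreal c * ennreal ((if NQ x then 1 else 0) * K x) \<partial>M1)"
        by (intro nn_integral_cong) (simp add: phiN ennreal_mult c0 K0)
      also have "\<dots> = ennreal c * (\<integral>\<^sup>+x. ennreal ((if NQ x then 1 else 0) * K x) \<partial>M1)"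
        by (rule nn_integral_cmult[OF NKm])
      also have "\<dots> \<le> ennreal c * (ennreal q * (\<integral>\<^sup>+x. ennreal (K x) \<partial>M1))"
      proof (intro mult_left_mono)
        show "(\<integral>\<^sup>+x. ennreal ((if NQ x then 1 else 0) * K x) \<partial>M1) \<le> ennreal q * (\<integral>\<^sup>+x. ennreal (K x) \<partial>M1)"
          unfolding NQ_def K_def M1_def q_def
        proof (rule prod_bound[OF _ IJ _ _ _ _ e0 e1])
          show "\<And>i. i \<in> {1..n+1} \<Longrightarrow> hfac n f g y' i \<in> borel_measurable borel"
            using hfac_meas[OF m, of "\<lambda>s. s" borel "\<lambda>_. y'"] by simp
        qed (auto intro: hfac_props[OF m])
      qed simp
      also have "\<dots> = ennreal q * (ennreal c * (\<integral>\<^sup>+x. ennreal (K x) \<partial>M1))" by (simp add: ac_simps)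
      also have "\<dots> = ennreal q * (\<integral>\<^sup>+x. ennreal c * ennreal (K x) \<partial>M1)"
        by (simp add: nn_integral_cmult[OF Km])
      also have "\<dots> = (\<integral>\<^sup>+x. ennreal q * (ennreal c * ennreal (K x)) \<partial>M1)"
        by (rule nn_integral_cmult[symmetric]) (use Km in measurable)
      also have "\<dots> = (\<integral>\<^sup>+x. ennreal q * ennreal (\<Phi> (\<lambda>_. True) (x, y)) \<partial>M1)"
        by (intro nn_integral_cong) (simp add: phiN ennreal_mult c0 K0)
      finally show "(\<integral>\<^sup>+x. ennreal (\<Phi> NQ (x, y)) \<partial>M1) \<le> (\<integral>\<^sup>+x. ennreal q * ennreal (\<Phi> (\<lambda>_. True) (x, y)) \<partial>M1)" .
    qed
    also have "\<dots> = (\<integral>\<^sup>+\<omega>. ennreal q * ennreal (\<Phi> (\<lambda>_. True) \<omega>) \<partial>(M1 \<Otimes>\<^sub>M M2))"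
      by (rule PS.nn_integral_snd) (use \<Phi>m[OF TQm] in measurable)
    also have "\<dots> = ennreal q * ST" unfolding ST_def
      by (rule nn_integral_cmult) (use \<Phi>m[OF TQm] in measurable)
    finally show ?thesis .
  qed
  have STfin: "ST \<noteq> top" using pos marg_eq by auto
  have SPfin: "SP \<noteq> top" and SNfin: "SN \<noteq> top" using STfin ST_sum by auto
  have r1: "enn2real ST = enn2real SP + enn2real SN"
    using ST_sum SPfin SNfin by (simp add: enn2real_plus less_top)
  have r2: "enn2real SN \<le> q * enn2real ST"
  proof -
    have "enn2real SN \<le> enn2real (ennreal q * ST)"
    proof (rule enn2real_mono[OF SN_le])
      have "ennreal q * ST \<noteq> top" using STfin by (simp add: ennreal_mult_eq_top_iff)
      then show "ennreal q * ST < top" by (simp add: less_top)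
    qed
    also have "\<dots> = q * enn2real ST" using q0 by (simp add: enn2real_mult)
    finally show ?thesis .
  qed
  have Tpos: "enn2real ST > 0" using pos marg_eq by simp
  have "1 - q \<le> enn2real SP / enn2real ST"
    using real_frac[OF r1 r2 Tpos] .
  then show ?thesis unfolding sawtooth_cond_def sl_eq marg_eq q_def .
qed


theorem mainTheorem13:
  fixes \<eta> \<epsilon> :: real
  assumes "0 < \<eta>" and "\<eta> < 1" and "0 < \<epsilon>"
  shows "\<exists>N0::nat. \<forall>n f g. sawtooth_model n f g \<and> n \<ge> N0 + 4 \<longrightarrow>
           (\<forall>r t. 2 \<le> r \<and> r \<le> n - N0 \<and> 0 \<le> t \<and> t \<le> 1 \<and>
                  sawtooth_marg n f g (r + N0) t > 0 \<longrightarrow>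
              sawtooth_cond n f g (r + N0) t (\<lambda>x y. \<exists>i\<in>{r..r + N0}. x i < \<eta>) \<ge> 1 - \<epsilon>)"
proof -
  obtain N where N: "(1 - \<eta>) ^ N < \<epsilon>"
    using real_arch_pow_inv[of \<epsilon> "1 - \<eta>"] assms by auto
  have qN: "(1 - \<eta>) ^ Suc N \<le> \<epsilon>"
  proof -
    have "(1 - \<eta>) ^ Suc N \<le> (1 - \<eta>) ^ N"
      using assms by (intro power_decreasing) auto
    then show ?thesis using N by simp
  qed
  show ?thesis
  proof (intro exI[of _ N] allI impI)
    fix n f g r t
    assume A: "sawtooth_model n f g \<and> N + 4 \<le> n"
      and B: "2 \<le> r \<and> r \<le> n - N \<and> 0 \<le> t \<and> t \<le> 1 \<and> 0 < sawtooth_marg n f g (r + N) t"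
    have IJ: "{r..r+N} \<subseteq> {1..n+1}" using A B by auto
    have "1 - (1 - \<eta>) ^ card {r..r+N} \<le> sawtooth_cond n f g (r + N) t (\<lambda>x y. \<exists>i\<in>{r..r + N}. x i < \<eta>)"
      using core[OF conjunct1[OF A] assms(1,2) IJ] B by blast
    moreover have "card {r..r+N} = Suc N" by simp
    ultimately show "1 - \<epsilon> \<le> sawtooth_cond n f g (r + N) t (\<lambda>x y. \<exists>i\<in>{r..r + N}. x i < \<eta>)"
      using qN by simp
  qed
qed

end
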